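(* Let $F$ be a finite field with $q=|F|$. Let $r,m,n\in\mathbb{N}$ satisfy $r\le m$ and $r\le n$. Then the number of $(m+n+1)$-tuples $x\in F^{m+n+1}$ satisfying $\operatorname{rank}(H_{m,n}(x))\le r$ is $q^{2r}$.
   Context: $\mathbb{N}=\{0,1,2,\ldots\}$. For $N\in\mathbb{N}$, $x=(x_0,\ldots,x_N)\in F^{N+1}$ and integers $p,p'\ge -1$ with $p+p'\le N$, the Hankel matrix $H_{p,p'}(x)$ is the $(p+1)\times(p'+1)$ matrix $(x_{i+j})_{0\le i\le p,\,0\le j\le p'}$. *)

theory Defs
  imports "Jordan_Normal_Form.DL_Rank"
begin

definition hankel :: "nat \<Rightarrow> nat \<Rightarrow> 'a list \<Rightarrow> 'a mat" where
  "hankel p p' x = mat (p+1) (p'+1) (\<lambda>(i,j). x ! (i+j))"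

definition mat_rank :: "'a::field mat \<Rightarrow> nat" where
  "mat_rank A = vec_space.rank (dim_row A) A"

end

theory Submission
  imports Defs "Jordan_Normal_Form.Matrix_Kernel" "HOL-Computational_Algebra.Formal_Power_Series"
begin


lemma (in vectorspace) card_carrier_fin_dim:
  assumes fd: "fin_dim" and KU: "carrier K = (UNIV :: 'a set)"
  shows "card (carrier V) = card (UNIV :: 'a set) ^ dim"
proof -
  obtain \<beta> where fb: "finite \<beta>" and b: "basis \<beta>" using finite_basis_exists[OF fd] by blast
  have bC: "\<beta> \<subseteq> carrier V" using b unfolding basis_def by blast
  have dimeq: "dim = card \<beta>" using dim_basis[OF fb b] .
  have crit: "\<forall>v. v \<in> carrier V \<longrightarrow> (\<exists>!a. a \<in> \<beta> \<rightarrow>\<^sub>E carrier K \<and> lincomb a \<beta> = v)"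
    using basis_criterion[OF fb bC] b by blast
  have bij: "bij_betw (\<lambda>a. lincomb a \<beta>) (\<beta> \<rightarrow>\<^sub>E carrier K) (carrier V)"
  proof (rule bij_betwI')
    fix a b assume a: "a \<in> \<beta> \<rightarrow>\<^sub>E carrier K" and bb: "b \<in> \<beta> \<rightarrow>\<^sub>E carrier K"
    have "lincomb a \<beta> \<in> carrier V" using a bC fb by (intro lincomb_closed) auto
    then show "(lincomb a \<beta> = lincomb b \<beta>) = (a = b)" using crit a bb by metis
  next
    fix a assume a: "a \<in> \<beta> \<rightarrow>\<^sub>E carrier K"
    show "lincomb a \<beta> \<in> carrier V" using a bC fb by (intro lincomb_closed) auto
  next
    fix v assume "v \<in> carrier V"
    then show "\<exists>a\<in>\<beta> \<rightarrow>\<^sub>E carrier K. v = lincomb a \<beta>" using crit by metis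
  qed
  have "card (carrier V) = card (\<beta> \<rightarrow>\<^sub>E carrier K)" using bij_betw_same_card[OF bij] by simp
  also have "\<dots> = card (UNIV :: 'a set) ^ card \<beta>" using fb by (simp add: card_PiE KU)
  finally show ?thesis using dimeq by simp
qed

context vec_space
begin

lemma image_mult_eq_span:
  assumes A: "A \<in> carrier_mat n nc"
  shows "(\<lambda>v. A *\<^sub>v v) ` carrier_vec nc = span (set (cols A))"
proof -
  have cd: "set (cols A) \<subseteq> carrier_vec n" using A cols_dim by blast
  have "span (set (cols A)) = span_list (cols A)" using span_list_as_span[OF cd] by simp
  also have "\<dots> = {A *\<^sub>v vec nc c | c. True}"
  proof -
    have m: "mat_of_cols n (cols A) = A" using A by auto
    have l: "length (cols A) = nc" using A by auto
    have "\<And>c. lincomb_list c (cols A) = A *\<^sub>v vec nc c"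
    proof -
      fix c
      have d: "\<forall>w\<in>set (cols A). dim_vec w = n" using cd by auto
      show "lincomb_list c (cols A) = A *\<^sub>v vec nc c"
        using lincomb_list_as_mat_mult[OF d, of c] m l by simp
    qed
    then show ?thesis unfolding span_list_def by auto
  qed
  also have "\<dots> = (\<lambda>v. A *\<^sub>v v) ` carrier_vec nc"
  proof (auto)
    fix v :: "'a vec" assume "v \<in> carrier_vec nc"
    then have "v = vec nc (\<lambda>i. v $ i)" by auto
    then show "\<exists>c. A *\<^sub>v v = A *\<^sub>v vec nc c" by (intro exI[of _ "\<lambda>i. v $ i"]) simp
  qed
  finally show ?thesis by simp
qed

lemma vs_span_cols:
  assumes A: "A \<in> carrier_mat n nc"
  shows "vectorspace class_ring (span_vs (set (cols A)))"
proof -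
  have cd: "set (cols A) \<subseteq> carrier_vec n" using A cols_dim by blast
  show ?thesis using cd span_is_subspace subspace_def subspace_is_vs by simp
qed

end

lemma card_kernel_rank:
  fixes A :: "'a :: {field,finite} mat"
  assumes A: "A \<in> carrier_mat nr nc"
  shows "card (mat_kernel A) * card (UNIV :: 'a set) ^ mat_rank A = card (UNIV :: 'a set) ^ nc"
proof -
  interpret vs: vec_space "TYPE('a)" nr .
  let ?S = "set (cols A)"
  let ?W = "vs.span ?S"
  have cd: "?S \<subseteq> carrier_vec nr" using A cols_dim by blast
  have vsW: "vectorspace class_ring (vs.span_vs ?S)"
    using vs.vs_span_cols[OF A] .
  have fdW: "vectorspace.fin_dim class_ring (vs.span_vs ?S)"
    using vs.fin_dim_span_cols[OF A] .
  have rk: "mat_rank A = vectorspace.dim class_ring (vs.span_vs ?S)"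
    unfolding mat_rank_def using A by (simp add: vec_space.rank_def)
  have cW: "card ?W = card (UNIV :: 'a set) ^ mat_rank A"
    using vectorspace.card_carrier_fin_dim[OF vsW fdW] rk by (simp add: class_ring_simps)
  have img: "(\<lambda>v. A *\<^sub>v v) ` carrier_vec nc = ?W" using vs.image_mult_eq_span[OF A] .
  define s where "s w = (SOME v. v \<in> carrier_vec nc \<and> A *\<^sub>v v = w)" for w
  have s: "s w \<in> carrier_vec nc \<and> A *\<^sub>v s w = w" if "w \<in> ?W" for w
  proof -
    from that obtain v where "v \<in> carrier_vec nc" "A *\<^sub>v v = w" unfolding img[symmetric] by blast
    then show ?thesis unfolding s_def by (metis (mono_tags, lifting) someI)
  qed
  have bij: "bij_betw (\<lambda>v. (A *\<^sub>v v, v - s (A *\<^sub>v v))) (carrier_vec nc) (?W \<times> mat_kernel A)"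
  proof (rule bij_betwI[where g = "\<lambda>(w, k). s w + k"])
    show "(\<lambda>v. (A *\<^sub>v v, v - s (A *\<^sub>v v))) \<in> carrier_vec nc \<rightarrow> ?W \<times> mat_kernel A"
    proof
      fix v :: "'a vec" assume v: "v \<in> carrier_vec nc"
      have w: "A *\<^sub>v v \<in> ?W" using img v by blast
      have sv: "s (A *\<^sub>v v) \<in> carrier_vec nc" "A *\<^sub>v s (A *\<^sub>v v) = A *\<^sub>v v" using s[OF w] by auto
      have "A *\<^sub>v (v - s (A *\<^sub>v v)) = A *\<^sub>v v - A *\<^sub>v s (A *\<^sub>v v)"
        using A v sv by (simp add: mult_minus_distrib_mat_vec)
      also have "\<dots> = 0\<^sub>v nr" using sv A v by (simp add: minus_cancel_vec)
      finally have "v - s (A *\<^sub>v v) \<in> mat_kernel A"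
        using A v sv by (intro mat_kernelI) auto
      then show "(A *\<^sub>v v, v - s (A *\<^sub>v v)) \<in> ?W \<times> mat_kernel A" using w by simp
    qed
    show "(\<lambda>(w, k). s w + k) \<in> ?W \<times> mat_kernel A \<rightarrow> carrier_vec nc"
      using s A by (auto dest: mat_kernelD)
    fix v :: "'a vec" assume v: "v \<in> carrier_vec nc"
    have w: "A *\<^sub>v v \<in> ?W" using img v by blast
    show "(\<lambda>(w, k). s w + k) (A *\<^sub>v v, v - s (A *\<^sub>v v)) = v"
      using s[OF w] v by auto
  next
    fix p assume p: "p \<in> ?W \<times> mat_kernel A"
    then obtain w k where p: "p = (w, k)" and w: "w \<in> ?W" and k: "k \<in> mat_kernel A" by auto
    have kc: "k \<in> carrier_vec nc" "A *\<^sub>v k = 0\<^sub>v nr" using mat_kernelD[OF A k] by auto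
    have sw: "s w \<in> carrier_vec nc" "A *\<^sub>v s w = w" using s[OF w] by auto
    have wc: "w \<in> carrier_vec nr" using sw A by (metis mult_mat_vec_carrier)
    have "A *\<^sub>v (s w + k) = A *\<^sub>v s w + A *\<^sub>v k"
      using A kc sw by (simp add: mult_add_distrib_mat_vec)
    also have "\<dots> = w" using kc sw wc by simp
    finally have Aw: "A *\<^sub>v (s w + k) = w" .
    show "(\<lambda>v. (A *\<^sub>v v, v - s (A *\<^sub>v v))) ((\<lambda>(w, k). s w + k) p) = p"
      using p Aw sw kc by auto
  qed
  have "card (carrier_vec nc :: 'a vec set) = card ?W * card (mat_kernel A)"
    using bij_betw_same_card[OF bij] card_cartesian_product by simp
  moreover have "card (carrier_vec nc :: 'a vec set) = card (UNIV :: 'a set) ^ nc"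
  proof -
    have "bij_betw list_of_vec (carrier_vec nc) {xs. set xs \<subseteq> (UNIV :: 'a set) \<and> length xs = nc}"
      proof (rule bij_betwI[where g = vec_of_list])
      show "list_of_vec \<in> carrier_vec nc \<rightarrow> {xs. set xs \<subseteq> (UNIV :: 'a set) \<and> length xs = nc}"
        by auto
      show "vec_of_list \<in> {xs. set xs \<subseteq> (UNIV :: 'a set) \<and> length xs = nc} \<rightarrow> carrier_vec nc"
        by (auto intro!: carrier_vecI)
      show "vec_of_list (list_of_vec x) = x" for x :: "'a vec" by (rule vec_list)
      show "list_of_vec (vec_of_list y) = y" for y :: "'a list" by (rule list_vec)
    qed
    then have "card (carrier_vec nc :: 'a vec set) = card {xs. set xs \<subseteq> (UNIV :: 'a set) \<and> length xs = nc}"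
      by (rule bij_betw_same_card)
    also have "\<dots> = card (UNIV :: 'a set) ^ nc" by (rule card_lists_length_eq) simp
    finally show ?thesis .
  qed
  ultimately show ?thesis using cW by (simp add: mult.commute)
qed



definition eqto :: "nat \<Rightarrow> 'a::comm_ring_1 fps \<Rightarrow> 'a fps \<Rightarrow> bool" where
  "eqto M F G \<longleftrightarrow> (\<forall>d\<le>M. fps_nth F d = fps_nth G d)"

lemma eqto_refl[simp]: "eqto M F F" by (simp add: eqto_def)
lemma eqto_sym: "eqto M F G \<Longrightarrow> eqto M G F" by (simp add: eqto_def)
lemma eqto_trans: "eqto M F G \<Longrightarrow> eqto M G H \<Longrightarrow> eqto M F H" by (simp add: eqto_def)

lemma eqto_mult_left:
  assumes "eqto M F G" shows "eqto M (H * F) (H * G)"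
  unfolding eqto_def
proof (intro allI impI)
  fix d assume d: "d \<le> M"
  have "fps_nth (H * F) d = (\<Sum>i=0..d. fps_nth H i * fps_nth F (d - i))" by (rule fps_mult_nth)
  also have "\<dots> = (\<Sum>i=0..d. fps_nth H i * fps_nth G (d - i))"
    using assms d unfolding eqto_def by (intro sum.cong) auto
  also have "\<dots> = fps_nth (H * G) d" by (rule fps_mult_nth[symmetric])
  finally show "fps_nth (H * F) d = fps_nth (H * G) d" .
qed

lemma eqto_mult_right:
  assumes "eqto M F G" shows "eqto M (F * H) (G * H)"
  using eqto_mult_left[OF assms, of H] by (simp add: mult.commute)

lemma eqto_inverse:
  fixes F G :: "'a::field fps"
  assumes e: "eqto M F G" and F0: "fps_nth F 0 \<noteq> 0"
  shows "eqto M (inverse F) (inverse G)"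
proof -
  have G0: "fps_nth G 0 \<noteq> 0" using e F0 unfolding eqto_def by auto
  have "eqto M (inverse F * G) (inverse F * F)" using eqto_mult_left[OF eqto_sym[OF e]] .
  then have "eqto M (inverse F * G) 1" using inverse_mult_eq_1[OF F0] by simp
  then have "eqto M (inverse F * G * inverse G) (1 * inverse G)" by (rule eqto_mult_right)
  moreover have "inverse F * G * inverse G = inverse F"
    using inverse_mult_eq_1'[OF G0] by (simp add: mult.assoc)
  ultimately show ?thesis by simp
qed

lemma fps_mult_nth_supp:
  fixes F G :: "'a::comm_ring_1 fps"
  assumes "\<And>d. a < d \<Longrightarrow> fps_nth F d = 0" "\<And>d. b < d \<Longrightarrow> fps_nth G d = 0" "a + b < j"
  shows "fps_nth (F * G) j = 0"
  unfolding fps_mult_nth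
proof (rule sum.neutral, intro ballI)
  fix i assume "i \<in> {0..j}"
  then show "fps_nth F i * fps_nth G (j - i) = 0" using assms by (cases "a < i") auto
qed

lemma card_fps_supp:
  assumes S: "finite S"
  shows "card {P :: 'a::{zero,finite} fps. \<forall>d. d \<notin> S \<longrightarrow> fps_nth P d = 0} = card (UNIV :: 'a set) ^ card S"
proof -
  have "bij_betw (\<lambda>P. restrict (\<lambda>d. fps_nth P d) S) {P :: 'a fps. \<forall>d. d \<notin> S \<longrightarrow> fps_nth P d = 0} (S \<rightarrow>\<^sub>E UNIV)"
  proof (rule bij_betwI[where g = "\<lambda>f. Abs_fps (\<lambda>d. if d \<in> S then f d else 0)"])
    show "(\<lambda>P. restrict (fps_nth P) S) \<in> {P. \<forall>d. d \<notin> S \<longrightarrow> fps_nth P d = 0} \<rightarrow> S \<rightarrow>\<^sub>E UNIV" by auto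
    show "(\<lambda>f. Abs_fps (\<lambda>d. if d \<in> S then f d else 0)) \<in> (S \<rightarrow>\<^sub>E UNIV) \<rightarrow> {P :: 'a fps. \<forall>d. d \<notin> S \<longrightarrow> fps_nth P d = 0}"
      by auto
    fix P :: "'a fps" assume "P \<in> {P. \<forall>d. d \<notin> S \<longrightarrow> fps_nth P d = 0}"
    then show "Abs_fps (\<lambda>d. if d \<in> S then restrict (fps_nth P) S d else 0) = P"
      by (intro fps_ext) auto
  next
    fix f :: "nat \<Rightarrow> 'a" assume "f \<in> S \<rightarrow>\<^sub>E UNIV"
    then show "restrict (fps_nth (Abs_fps (\<lambda>d. if d \<in> S then f d else 0))) S = f"
      by (auto simp: restrict_def PiE_def extensional_def)
  qed
  then have "card {P :: 'a fps. \<forall>d. d \<notin> S \<longrightarrow> fps_nth P d = 0} = card (S \<rightarrow>\<^sub>E (UNIV :: 'a set))"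
    by (rule bij_betw_same_card)
  also have "\<dots> = card (UNIV :: 'a set) ^ card S" using S by (simp add: card_PiE)
  finally show ?thesis .
qed

lemma finite_fps_supp:
  assumes S: "finite S"
  shows "finite {P :: 'a::{zero,finite} fps. \<forall>d. d \<notin> S \<longrightarrow> fps_nth P d = 0}"
proof -
  have "{P :: 'a fps. \<forall>d. d \<notin> S \<longrightarrow> fps_nth P d = 0} \<subseteq> (\<lambda>f. Abs_fps (\<lambda>d. if d \<in> S then f d else 0)) ` (S \<rightarrow>\<^sub>E UNIV)"
  proof
    fix P :: "'a fps" assume P: "P \<in> {P. \<forall>d. d \<notin> S \<longrightarrow> fps_nth P d = 0}"
    have "P = Abs_fps (\<lambda>d. if d \<in> S then restrict (fps_nth P) S d else 0)"
      using P by (intro fps_ext) auto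
    moreover have "restrict (fps_nth P) S \<in> S \<rightarrow>\<^sub>E UNIV" by auto
    ultimately show "P \<in> (\<lambda>f. Abs_fps (\<lambda>d. if d \<in> S then f d else 0)) ` (S \<rightarrow>\<^sub>E UNIV)" by blast
  qed
  moreover have "finite (S \<rightarrow>\<^sub>E (UNIV :: 'a set))" using S by (intro finite_PiE) auto
  ultimately show ?thesis using finite_subset by blast
qed



definition Xs :: "'a::zero list \<Rightarrow> 'a fps" where
  "Xs x = Abs_fps (\<lambda>j. if j < length x then x ! j else 0)"

definition HK :: "nat \<Rightarrow> nat \<Rightarrow> 'a::comm_ring_1 list \<Rightarrow> 'a fps set" where
  "HK m n x = {P. (\<forall>d. n < d \<longrightarrow> fps_nth P d = 0) \<and> (\<forall>i\<le>m. fps_nth (Xs x * P) (n + i) = 0)}"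

lemma Xs_nth: "fps_nth (Xs x) j = (if j < length x then x ! j else 0)"
  by (simp add: Xs_def)

lemma Xs_replicate:
  "Xs (replicate k 0 @ y) = fps_X ^ k * Xs (y :: 'a::comm_ring_1 list)"
proof (rule fps_ext)
  fix j
  show "fps_nth (Xs (replicate k 0 @ y)) j = fps_nth (fps_X ^ k * Xs y) j"
    by (cases "j < k") (auto simp: Xs_nth fps_X_power_mult_nth nth_append)
qed

lemma HK_T:
  fixes a :: "'a::comm_ring_1"
  assumes len: "k + length rest = m + n"
  shows "HK m n (replicate k 0 @ a # rest) =
    {P. (\<forall>d. n < d \<longrightarrow> fps_nth P d = 0) \<and>
        (\<forall>e. n - k \<le> e \<and> e \<le> m + n - k \<longrightarrow> fps_nth (Xs (a # rest) * P) e = 0)}"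
    (is "_ = ?R")
proof -
  let ?T = "Xs (a # rest)"
  have nth: "fps_nth (Xs (replicate k 0 @ a # rest) * P) j = (if j < k then 0 else fps_nth (?T * P) (j - k))"
    for P j by (simp add: Xs_replicate mult.assoc fps_X_power_mult_nth)
  show ?thesis
  proof (intro Set.set_eqI iffI)
    fix P assume "P \<in> HK m n (replicate k 0 @ a # rest)"
    then have s: "\<forall>d. n < d \<longrightarrow> fps_nth P d = 0" and c: "\<And>i. i \<le> m \<Longrightarrow> fps_nth (Xs (replicate k 0 @ a # rest) * P) (n + i) = 0"
      unfolding HK_def by auto
    have "fps_nth (?T * P) e = 0" if e: "n - k \<le> e" "e \<le> m + n - k" for e
    proof -
      have "e + k - n \<le> m" using e len by linarith
      from c[OF this] have "fps_nth (Xs (replicate k 0 @ a # rest) * P) (n + (e + k - n)) = 0" .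
      moreover have "n + (e + k - n) = e + k" using e by linarith
      ultimately show ?thesis using nth by simp
    qed
    then show "P \<in> ?R" using s by auto
  next
    fix P assume "P \<in> ?R"
    then have s: "\<forall>d. n < d \<longrightarrow> fps_nth P d = 0" and c: "\<And>e. n - k \<le> e \<Longrightarrow> e \<le> m + n - k \<Longrightarrow> fps_nth (?T * P) e = 0"
      by auto
    have "fps_nth (Xs (replicate k 0 @ a # rest) * P) (n + i) = 0" if i: "i \<le> m" for i
    proof (cases "n + i < k")
      case True then show ?thesis using nth by simp
    next
      case False
      then have "n - k \<le> n + i - k" "n + i - k \<le> m + n - k" using i by linarith+
      then show ?thesis using nth c False by simp
    qed
    then show "P \<in> HK m n (replicate k 0 @ a # rest)" unfolding HK_def using s by auto
  qed
qed

lemma cutoff_eqto: "eqto M (fps_cutoff (Suc n) F) F \<longleftrightarrow> (\<forall>d. n < d \<and> d \<le> M \<longrightarrow> fps_nth F d = 0)"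
  unfolding eqto_def by auto

lemma G1:
  fixes T :: "'a::{field,finite} fps"
  assumes T0: "fps_nth T 0 \<noteq> 0" and en: "e \<le> n"
  shows "card {P. (\<forall>d. n < d \<longrightarrow> fps_nth P d = 0) \<and> (\<forall>j. c \<le> j \<and> j \<le> e \<longrightarrow> fps_nth (T * P) j = 0)}
       = card (UNIV :: 'a set) ^ card ({..n} - {c..e})"
proof -
  let ?U = "inverse T"
  have UT: "?U * T = 1" using inverse_mult_eq_1[OF T0] .
  have TU: "T * ?U = 1" using inverse_mult_eq_1'[OF T0] .
  let ?A = "{P. (\<forall>d. n < d \<longrightarrow> fps_nth P d = 0) \<and> (\<forall>j. c \<le> j \<and> j \<le> e \<longrightarrow> fps_nth (T * P) j = 0)}"
  let ?B = "{Q :: 'a fps. \<forall>d. d \<notin> ({..n} - {c..e}) \<longrightarrow> fps_nth Q d = 0}"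
  have cut: "eqto n (fps_cutoff (Suc n) F) F" for F :: "'a fps" by (simp add: eqto_def)
  have "bij_betw (\<lambda>P. fps_cutoff (Suc n) (T * P)) ?A ?B"
  proof (rule bij_betwI[where g = "\<lambda>Q. fps_cutoff (Suc n) (?U * Q)"])
    show "(\<lambda>P. fps_cutoff (Suc n) (T * P)) \<in> ?A \<rightarrow> ?B"
    proof
      fix P assume P: "P \<in> ?A"
      show "fps_cutoff (Suc n) (T * P) \<in> ?B"
      proof (intro CollectI allI impI)
        fix d assume "d \<notin> {..n} - {c..e}"
        then show "fps_nth (fps_cutoff (Suc n) (T * P)) d = 0" using P by auto
      qed
    qed
    show "(\<lambda>Q. fps_cutoff (Suc n) (?U * Q)) \<in> ?B \<rightarrow> ?A"
    proof
      fix Q assume Q: "Q \<in> ?B"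
      have "eqto n (T * fps_cutoff (Suc n) (?U * Q)) (T * (?U * Q))" by (rule eqto_mult_left[OF cut])
      then have e1: "eqto n (T * fps_cutoff (Suc n) (?U * Q)) Q" by (simp add: TU mult.assoc[symmetric])
      show "fps_cutoff (Suc n) (?U * Q) \<in> ?A"
      proof (intro CollectI conjI allI impI)
        fix j assume j: "c \<le> j \<and> j \<le> e"
        then have "fps_nth (T * fps_cutoff (Suc n) (?U * Q)) j = fps_nth Q j" using e1 en unfolding eqto_def by auto
        also have "\<dots> = 0" using Q j by auto
        finally show "fps_nth (T * fps_cutoff (Suc n) (?U * Q)) j = 0" .
      qed auto
    qed
    fix P assume P: "P \<in> ?A"
    have "eqto n (?U * fps_cutoff (Suc n) (T * P)) (?U * (T * P))" by (rule eqto_mult_left[OF cut])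
    then have e1: "eqto n (?U * fps_cutoff (Suc n) (T * P)) P" by (simp add: UT mult.assoc[symmetric])
    show "fps_cutoff (Suc n) (?U * fps_cutoff (Suc n) (T * P)) = P"
    proof (rule fps_ext)
      fix d show "fps_nth (fps_cutoff (Suc n) (?U * fps_cutoff (Suc n) (T * P))) d = fps_nth P d"
        using e1 P unfolding eqto_def by auto
    qed
  next
    fix Q assume Q: "Q \<in> ?B"
    have "eqto n (T * fps_cutoff (Suc n) (?U * Q)) (T * (?U * Q))" by (rule eqto_mult_left[OF cut])
    then have e1: "eqto n (T * fps_cutoff (Suc n) (?U * Q)) Q" by (simp add: TU mult.assoc[symmetric])
    show "fps_cutoff (Suc n) (T * fps_cutoff (Suc n) (?U * Q)) = Q"
    proof (rule fps_ext)
      fix d show "fps_nth (fps_cutoff (Suc n) (T * fps_cutoff (Suc n) (?U * Q))) d = fps_nth Q d"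
        using e1 Q unfolding eqto_def by auto
    qed
  qed
  then have "card ?A = card ?B" by (rule bij_betw_same_card)
  also have "\<dots> = card (UNIV :: 'a set) ^ card ({..n} - {c..e})" by (rule card_fps_supp) auto
  finally show ?thesis .
qed


lemma Euclid:
  fixes T :: "'a::field fps"
  assumes T0: "fps_nth T 0 \<noteq> 0" and kn: "k \<le> n" and nM: "n \<le> M"
  shows "bij_betw (\<lambda>G. fps_cutoff (Suc n) (inverse T * G))
     {G. (\<forall>d. n - k \<le> d \<longrightarrow> fps_nth G d = 0) \<and> (\<forall>j. n < j \<and> j \<le> M \<longrightarrow> fps_nth (inverse T * G) j = 0)}
     {P. (\<forall>d. n < d \<longrightarrow> fps_nth P d = 0) \<and> (\<forall>e. n - k \<le> e \<and> e \<le> M \<longrightarrow> fps_nth (T * P) e = 0)}"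
    (is "bij_betw ?f ?A2 ?A1")
proof -
  let ?U = "inverse T"
  have UT: "?U * T = 1" using inverse_mult_eq_1[OF T0] .
  have TU: "T * ?U = 1" using inverse_mult_eq_1'[OF T0] .
  have i1: "eqto M (T * ?f G) G" if G: "G \<in> ?A2" for G
  proof -
    have "eqto M (?f G) (?U * G)" using G unfolding cutoff_eqto by auto
    then have "eqto M (T * ?f G) (T * (?U * G))" by (rule eqto_mult_left)
    then show ?thesis by (simp add: TU mult.assoc[symmetric])
  qed
  let ?g = "\<lambda>P. fps_cutoff (n - k) (T * P)"
  have i2: "eqto M (?U * ?g P) P" if P: "P \<in> ?A1" for P
  proof -
    have "eqto M (?g P) (T * P)" using P unfolding eqto_def by auto
    then have "eqto M (?U * ?g P) (?U * (T * P))" by (rule eqto_mult_left)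
    then show ?thesis by (simp add: UT mult.assoc[symmetric])
  qed
  show ?thesis
  proof (rule bij_betwI[where g = ?g])
    show "?f \<in> ?A2 \<rightarrow> ?A1"
    proof
      fix G assume G: "G \<in> ?A2"
      have "fps_nth (T * ?f G) e = 0" if e: "n - k \<le> e" "e \<le> M" for e
        using i1[OF G] e G unfolding eqto_def by auto
      then show "?f G \<in> ?A1" by auto
    qed
    show "?g \<in> ?A1 \<rightarrow> ?A2"
    proof
      fix P assume P: "P \<in> ?A1"
      have "fps_nth (?U * ?g P) j = 0" if j: "n < j" "j \<le> M" for j
        using i2[OF P] j P unfolding eqto_def by auto
      then show "?g P \<in> ?A2" by auto
    qed
  next
    fix G assume G: "G \<in> ?A2"
    show "?g (?f G) = G"
    proof (rule fps_ext)
      fix d show "fps_nth (?g (?f G)) d = fps_nth G d"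
        using i1[OF G] G kn nM unfolding eqto_def by auto
    qed
  next
    fix P assume P: "P \<in> ?A1"
    show "?f (?g P) = P"
    proof (rule fps_ext)
      fix d show "fps_nth (?f (?g P)) d = fps_nth P d"
        using i2[OF P] P kn nM unfolding eqto_def by auto
    qed
  qed
qed


lemma A2_eq:
  fixes U :: "'a::comm_ring_1 fps"
  assumes km: "k < m" and kn: "k < n" and lr: "length \<rho> = m + n - 2 * k - 1"
    and r: "\<And>i. i < length \<rho> \<Longrightarrow> \<rho> ! i = fps_nth U (k + 2 + i)"
  shows "{G. (\<forall>d. n - k \<le> d \<longrightarrow> fps_nth G d = 0) \<and> (\<forall>j. n < j \<and> j \<le> m + n - k \<longrightarrow> fps_nth (U * G) j = 0)}
     = HK (m - k - 1) (n - k - 1) \<rho>"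
proof -
  let ?S = "fps_shift (k + 2) U" and ?C = "fps_cutoff (k + 2) U"
  have key: "fps_nth (U * G) (n + 1 + i) = fps_nth (Xs \<rho> * G) (n - k - 1 + i)"
    if G: "\<forall>d. n - k \<le> d \<longrightarrow> fps_nth G d = 0" and i: "i \<le> m - k - 1" for G i
  proof -
    have dec: "U * G = fps_X ^ (k + 2) * (?S * G) + ?C * G"
      using fps_shift_cutoff'[of "k + 2" U] by (metis distrib_right mult.assoc)
    have c0: "fps_nth (?C * G) (n + 1 + i) = 0"
      by (rule fps_mult_nth_supp[where a = "k + 1" and b = "n - k - 1"]) (use G kn in auto)
    have e: "eqto (m + n - 2 * k - 2) ?S (Xs \<rho>)"
      unfolding eqto_def using lr r km kn by (auto simp: Xs_nth add.commute)
    have "fps_nth (fps_X ^ (k + 2) * (?S * G)) (n + 1 + i) = fps_nth (?S * G) (n - k - 1 + i)"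
      using kn fps_X_power_mult_nth[of "k + 2" "?S * G" "n + 1 + i"] by (simp del: power_Suc add_2_eq_Suc' add: numeral_2_eq_2)
    also have "\<dots> = fps_nth (Xs \<rho> * G) (n - k - 1 + i)"
      using eqto_mult_right[OF e, of G] i km kn unfolding eqto_def by auto
    finally show ?thesis using dec c0 by simp
  qed
  show ?thesis
  proof (intro Set.set_eqI iffI)
    fix G assume G: "G \<in> {G. (\<forall>d. n - k \<le> d \<longrightarrow> fps_nth G d = 0) \<and> (\<forall>j. n < j \<and> j \<le> m + n - k \<longrightarrow> fps_nth (U * G) j = 0)}"
    then have s: "\<forall>d. n - k \<le> d \<longrightarrow> fps_nth G d = 0" and c: "\<And>j. n < j \<Longrightarrow> j \<le> m + n - k \<Longrightarrow> fps_nth (U * G) j = 0" by auto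
    have "fps_nth (Xs \<rho> * G) (n - k - 1 + i) = 0" if i: "i \<le> m - k - 1" for i
      using key[OF s i] c[of "n + 1 + i"] i km by simp
    moreover have "\<forall>d. n - k - 1 < d \<longrightarrow> fps_nth G d = 0" using s by auto
    ultimately show "G \<in> HK (m - k - 1) (n - k - 1) \<rho>" unfolding HK_def by auto
  next
    fix G assume "G \<in> HK (m - k - 1) (n - k - 1) \<rho>"
    then have s0: "\<forall>d. n - k - 1 < d \<longrightarrow> fps_nth G d = 0" and c: "\<And>i. i \<le> m - k - 1 \<Longrightarrow> fps_nth (Xs \<rho> * G) (n - k - 1 + i) = 0"
      unfolding HK_def by auto
    have s: "\<forall>d. n - k \<le> d \<longrightarrow> fps_nth G d = 0" using s0 kn by auto
    have "fps_nth (U * G) j = 0" if j: "n < j" "j \<le> m + n - k" for j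
    proof -
      have "j - n - 1 \<le> m - k - 1" using j by linarith
      from key[OF s this] c[OF this] have "fps_nth (U * G) (n + 1 + (j - n - 1)) = 0" by simp
      moreover have "n + 1 + (j - n - 1) = j" using j by linarith
      ultimately show ?thesis by simp
    qed
    then show "G \<in> {G. (\<forall>d. n - k \<le> d \<longrightarrow> fps_nth G d = 0) \<and> (\<forall>j. n < j \<and> j \<le> m + n - k \<longrightarrow> fps_nth (U * G) j = 0)}"
      using s by auto
  qed
qed



lemma card_len: "card {xs :: 'a::finite list. length xs = n} = card (UNIV :: 'a set) ^ n"
  using card_lists_length_eq[of "UNIV :: 'a set" n] by simp

lemma fin_len: "finite {xs :: 'a::finite list. length xs = n}"
  using finite_lists_length_eq[of "UNIV :: 'a set" n] by simp

lemma split_step: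
  fixes P :: "'a::{zero,finite} list \<Rightarrow> bool"
  shows "card {x. length x = Suc L \<and> P x} =
     card {(a, rest). a \<noteq> 0 \<and> length rest = L \<and> P (a # rest)} + card {y. length y = L \<and> P (0 # y)}"
proof -
  let ?A = "{(a, rest). a \<noteq> 0 \<and> length rest = L \<and> P (a # rest)}"
  let ?B = "{y. length y = L \<and> P (0 # y)}"
  have eq: "{x. length x = Suc L \<and> P x} = (\<lambda>(a, rest). a # rest) ` ?A \<union> (\<lambda>y. 0 # y) ` ?B"
  proof (intro Set.set_eqI iffI)
    fix x assume "x \<in> {x. length x = Suc L \<and> P x}"
    then obtain b y where x: "x = b # y" "length y = L" "P (b # y)" by (cases x) auto
    show "x \<in> (\<lambda>(a, rest). a # rest) ` ?A \<union> (\<lambda>y. 0 # y) ` ?B"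
    proof (cases "b = 0")
      case True then show ?thesis using x by auto
    next
      case False then have "(b, y) \<in> ?A" using x by auto
      then show ?thesis using x by force
    qed
  qed auto
  have finA: "finite ?A"
  proof (rule finite_subset)
    show "?A \<subseteq> (UNIV :: 'a set) \<times> {xs. length xs = L}" by auto
    show "finite ((UNIV :: 'a set) \<times> {xs :: 'a list. length xs = L})" by (intro finite_cartesian_product finite_UNIV fin_len)
  qed
  have finB: "finite ?B" using fin_len[of L] by (rule rev_finite_subset) auto
  have "card {x. length x = Suc L \<and> P x} = card ((\<lambda>(a, rest). a # rest) ` ?A) + card ((\<lambda>y. 0 # y) ` ?B)"
    unfolding eq by (rule card_Un_disjoint) (use finA finB in auto)
  also have "card ((\<lambda>(a, rest). a # rest) ` ?A) = card ?A"
    by (rule card_image) (auto simp: inj_on_def)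
  also have "card ((\<lambda>y. 0 # y) ` ?B) = card ?B"
    by (rule card_image) (auto simp: inj_on_def)
  finally show ?thesis .
qed

lemma decomp:
  fixes P :: "'a::{zero,finite} list \<Rightarrow> bool"
  shows "card {x. length x = L \<and> P x} = (if P (replicate L 0) then 1 else 0) +
     (\<Sum>k<L. card {(a, rest). a \<noteq> 0 \<and> length rest = L - 1 - k \<and> P (replicate k 0 @ a # rest)})"
proof (induction L arbitrary: P)
  case 0
  have "{x :: 'a list. length x = 0 \<and> P x} = (if P [] then {[]} else {})" by auto
  then show ?case by simp
next
  case (Suc L)
  have "card {x. length x = Suc L \<and> P x} =
     card {(a, rest). a \<noteq> 0 \<and> length rest = L \<and> P (a # rest)} + card {y. length y = L \<and> P (0 # y)}"
    by (rule split_step)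
  also have "card {y. length y = L \<and> P (0 # y)} = (if P (0 # replicate L 0) then 1 else 0) +
     (\<Sum>k<L. card {(a, rest). a \<noteq> 0 \<and> length rest = L - 1 - k \<and> P (0 # replicate k 0 @ a # rest)})"
    using Suc.IH[of "\<lambda>y. P (0 # y)"] by simp
  finally have 1: "card {x. length x = Suc L \<and> P x} =
     card {(a, rest). a \<noteq> 0 \<and> length rest = L \<and> P (a # rest)} + ((if P (0 # replicate L 0) then 1 else 0) +
     (\<Sum>k<L. card {(a, rest). a \<noteq> 0 \<and> length rest = L - 1 - k \<and> P (0 # replicate k 0 @ a # rest)}))" .
  define g where "g k = card {(a, rest). a \<noteq> 0 \<and> length rest = Suc L - 1 - k \<and> P (replicate k 0 @ a # rest)}" for k
  have "(\<Sum>k<Suc L. g k) = g 0 + (\<Sum>k<L. g (Suc k))" by (rule sum.lessThan_Suc_shift)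
  moreover have "g 0 = card {(a, rest). a \<noteq> 0 \<and> length rest = L \<and> P (a # rest)}" unfolding g_def by simp
  moreover have "g (Suc k) = card {(a, rest). a \<noteq> 0 \<and> length rest = L - 1 - k \<and> P (0 # replicate k 0 @ a # rest)}" for k
    unfolding g_def by simp
  ultimately have "(\<Sum>k<Suc L. g k) = card {(a, rest). a \<noteq> 0 \<and> length rest = L \<and> P (a # rest)} +
     (\<Sum>k<L. card {(a, rest). a \<noteq> 0 \<and> length rest = L - 1 - k \<and> P (0 # replicate k 0 @ a # rest)})" by simp
  then show ?case using 1 unfolding g_def by simp
qed

lemma pair_count:
  fixes Q :: "'a::{zero,finite} \<Rightarrow> 'a list \<Rightarrow> bool"
  assumes c: "\<And>a. a \<noteq> 0 \<Longrightarrow> card {rest. length rest = L \<and> Q a rest} = c"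
  shows "card {(a, rest). a \<noteq> 0 \<and> length rest = L \<and> Q a rest} = (card (UNIV :: 'a set) - 1) * c"
proof -
  have eq: "{(a, rest). a \<noteq> 0 \<and> length rest = L \<and> Q a rest} = Sigma (- {0}) (\<lambda>a. {rest. length rest = L \<and> Q a rest})"
    by auto
  have "card (Sigma (- {0}) (\<lambda>a. {rest. length rest = L \<and> Q a rest})) = (\<Sum>a\<in>- {0}. card {rest. length rest = L \<and> Q a rest})"
    by (rule card_SigmaI) (auto intro: rev_finite_subset[OF fin_len[of L]])
  also have "\<dots> = (\<Sum>a\<in>- {0::'a}. c)" using c by (intro sum.cong) auto
  also have "\<dots> = card (- {0::'a}) * c" by simp
  also have "card (- {0::'a}) = card (UNIV :: 'a set) - 1"
    by (simp add: Compl_eq_Diff_UNIV card_Diff_singleton)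
  finally show ?thesis using eq by simp
qed

lemma split_drop:
  "card {ul :: 'a::finite list. length ul = a + b \<and> Q (drop a ul)} = card (UNIV :: 'a set) ^ a * card {\<rho>. length \<rho> = b \<and> Q \<rho>}"
proof -
  have "bij_betw (\<lambda>(u, \<rho>). u @ \<rho>) ({u. length u = a} \<times> {\<rho>. length \<rho> = b \<and> Q \<rho>}) {ul. length ul = a + b \<and> Q (drop a ul)}"
  proof (rule bij_betwI[where g = "\<lambda>ul. (take a ul, drop a ul)"])
    show "(\<lambda>(u, \<rho>). u @ \<rho>) \<in> {u. length u = a} \<times> {\<rho>. length \<rho> = b \<and> Q \<rho>} \<rightarrow> {ul. length ul = a + b \<and> Q (drop a ul)}"
      by auto
    show "(\<lambda>ul. (take a ul, drop a ul)) \<in> {ul. length ul = a + b \<and> Q (drop a ul)} \<rightarrow> {u. length u = a} \<times> {\<rho>. length \<rho> = b \<and> Q \<rho>}"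
      by auto
  qed auto
  then have "card {ul. length ul = a + b \<and> Q (drop a ul)} = card ({u :: 'a list. length u = a} \<times> {\<rho>. length \<rho> = b \<and> Q \<rho>})"
    by (simp add: bij_betw_same_card)
  also have "\<dots> = card (UNIV :: 'a set) ^ a * card {\<rho>. length \<rho> = b \<and> Q \<rho>}"
    by (simp add: card_cartesian_product card_len)
  finally show ?thesis .
qed

definition ul :: "'a::field list \<Rightarrow> nat \<Rightarrow> 'a list" where
  "ul t L = map (\<lambda>j. fps_nth (inverse (Xs t)) (Suc j)) [0..<L]"

lemma ul_inj:
  fixes a :: "'a::{field,finite}"
  assumes a: "a \<noteq> 0"
  shows "inj_on (\<lambda>rest. ul (a # rest) L) {rest. length rest = L}"
proof (rule inj_onI)
  fix r1 r2 :: "'a list" assume r1: "r1 \<in> {rest. length rest = L}" and r2: "r2 \<in> {rest. length rest = L}"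
    and eq: "ul (a # r1) L = ul (a # r2) L"
  let ?T1 = "Xs (a # r1)" and ?T2 = "Xs (a # r2)"
  have T10: "fps_nth ?T1 0 \<noteq> 0" and T20: "fps_nth ?T2 0 \<noteq> 0" using a by (auto simp: Xs_nth)
  have e: "eqto L (inverse ?T1) (inverse ?T2)"
    unfolding eqto_def
  proof (intro allI impI)
    fix d assume d: "d \<le> L"
    show "fps_nth (inverse ?T1) d = fps_nth (inverse ?T2) d"
    proof (cases d)
      case 0 then show ?thesis by (simp add: Xs_nth)
    next
      case (Suc j)
      then have "j < L" using d by simp
      then have "ul (a # r1) L ! j = ul (a # r2) L ! j" using eq by simp
      then show ?thesis using Suc \<open>j < L\<close> by (simp add: ul_def)
    qed
  qed
  have "eqto L (inverse (inverse ?T1)) (inverse (inverse ?T2))"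
    by (rule eqto_inverse[OF e]) (use T10 in simp)
  then have e2: "eqto L ?T1 ?T2" using T10 T20 by simp
  show "r1 = r2"
  proof (rule nth_equalityI)
    show "length r1 = length r2" using r1 r2 by simp
    fix j assume "j < length r1"
    then have "Suc j \<le> L" using r1 by simp
    then have "fps_nth ?T1 (Suc j) = fps_nth ?T2 (Suc j)" using e2 unfolding eqto_def by blast
    then show "r1 ! j = r2 ! j" using r1 r2 \<open>j < length r1\<close> by (simp add: Xs_nth)
  qed
qed

lemma ul_count:
  fixes a :: "'a::{field,finite}"
  assumes a: "a \<noteq> 0"
  shows "card {rest. length rest = L \<and> Q (ul (a # rest) L)} = card {u. length u = L \<and> Q u}"
proof -
  let ?f = "\<lambda>rest. ul (a # rest) L"
  have inj: "inj_on ?f {rest. length rest = L}" by (rule ul_inj[OF a])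
  have sub: "?f ` {rest. length rest = L} \<subseteq> {u. length u = L}" by (auto simp: ul_def)
  have "card (?f ` {rest. length rest = L}) = card {rest :: 'a list. length rest = L}"
    by (rule card_image[OF inj])
  then have "card (?f ` {rest. length rest = L}) = card {u :: 'a list. length u = L}" by (simp add: card_len)
  then have img: "?f ` {rest. length rest = L} = {u. length u = L}"
    by (intro card_subset_eq[OF fin_len sub])
  have "{u. length u = L \<and> Q u} = ?f ` {rest. length rest = L \<and> Q (ul (a # rest) L)}"
  proof (intro Set.set_eqI iffI)
    fix u assume u: "u \<in> {u. length u = L \<and> Q u}"
    then have "u \<in> ?f ` {rest. length rest = L}" using img by simp
    then obtain rest where "length rest = L" "u = ?f rest" by auto
    then show "u \<in> ?f ` {rest. length rest = L \<and> Q (ul (a # rest) L)}" using u by auto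
  qed (auto simp: ul_def)
  moreover have "inj_on ?f {rest. length rest = L \<and> Q (ul (a # rest) L)}"
    by (rule inj_on_subset[OF inj]) auto
  ultimately show ?thesis by (simp add: card_image)
qed



lemma geo_nat: "(q - 1) * (\<Sum>j<r. q ^ j) = q ^ r - (1::nat)" if "q \<ge> 1"
proof (induction r)
  case 0 then show ?case by simp
next
  case (Suc r)
  have "(q - 1) * (\<Sum>j<Suc r. q ^ j) = (q - 1) * (\<Sum>j<r. q ^ j) + (q - 1) * q ^ r" by (simp add: algebra_simps)
  also have "\<dots> = q ^ r - 1 + (q - 1) * q ^ r" using Suc by simp
  also have "\<dots> = q ^ Suc r - 1"
  proof -
    have "q ^ r \<ge> 1" using that by simp
    then show ?thesis using that by (simp add: algebra_simps diff_mult_distrib)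
  qed
  finally show ?case .
qed

lemma final_sum:
  fixes q m n r :: nat
  assumes q: "q \<ge> 1" and rm: "r \<le> m" and rn: "r \<le> n"
  shows "1 + (\<Sum>k<m+n+1. (q - 1) * (if k < r then q ^ (k + 1) * q ^ (2 * (r - k - 1))
              else if m + n + 1 - r \<le> k then q ^ (m + n - k) else 0)) = q ^ (2 * r)"
proof -
  let ?N = "m + n"
  define f where "f k = (q - 1) * (if k < r then q ^ (k + 1) * q ^ (2 * (r - k - 1))
              else if ?N + 1 - r \<le> k then q ^ (?N - k) else 0)" for k
  define G where "G = (\<Sum>j<r. (q - 1) * q ^ j)"
  have G: "G = q ^ r - 1" unfolding G_def using geo_nat[OF q, of r] by (simp add: sum_distrib_left)
  have r1: "r \<le> ?N + 1 - r" using rm rn by linarith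
  have r2: "?N + 1 - r \<le> ?N + 1" by simp
  have "(\<Sum>k<?N+1. f k) = (\<Sum>k\<in>{0..<r}. f k) + (\<Sum>k\<in>{r..<?N + 1 - r}. f k) + (\<Sum>k\<in>{?N + 1 - r..<?N + 1}. f k)"
    using sum.atLeastLessThan_concat[of 0 r "?N + 1 - r" f] sum.atLeastLessThan_concat[of 0 "?N + 1 - r" "?N + 1" f] r1 r2
    by (simp add: lessThan_atLeast0)
  also have "(\<Sum>k\<in>{r..<?N + 1 - r}. f k) = 0" unfolding f_def by (intro sum.neutral) auto
  also have "(\<Sum>k\<in>{0..<r}. f k) = q ^ r * G"
  proof -
    have "(\<Sum>k\<in>{0..<r}. f k) = (\<Sum>k<r. q ^ r * ((q - 1) * q ^ (r - Suc k)))"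
      unfolding f_def lessThan_atLeast0[symmetric]
    proof (intro sum.cong refl)
      fix k assume k: "k \<in> {..<r}"
      then have "k + 1 + 2 * (r - k - 1) = r + (r - Suc k)" by auto
      then have "q ^ (k + 1) * q ^ (2 * (r - k - 1)) = q ^ r * q ^ (r - Suc k)" by (metis power_add)
      then show "(q - 1) * (if k < r then q ^ (k + 1) * q ^ (2 * (r - k - 1)) else if ?N + 1 - r \<le> k then q ^ (?N - k) else 0)
          = q ^ r * ((q - 1) * q ^ (r - Suc k))" using k by simp
    qed
    also have "\<dots> = q ^ r * (\<Sum>k<r. (q - 1) * q ^ (r - Suc k))" by (simp add: sum_distrib_left)
    also have "(\<Sum>k<r. (q - 1) * q ^ (r - Suc k)) = G" unfolding G_def by (rule sum.nat_diff_reindex)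
    finally show ?thesis .
  qed
  also have "(\<Sum>k\<in>{?N + 1 - r..<?N + 1}. f k) = G"
  proof -
    have "(\<Sum>k\<in>{?N + 1 - r..<?N + 1}. f k) = (\<Sum>k\<in>{0 + (?N + 1 - r)..<r + (?N + 1 - r)}. f k)"
      using r1 by simp
    also have "\<dots> = (\<Sum>i\<in>{0..<r}. f (i + (?N + 1 - r)))" by (rule sum.shift_bounds_nat_ivl)
    also have "\<dots> = (\<Sum>i<r. (q - 1) * q ^ (r - Suc i))"
      unfolding lessThan_atLeast0[symmetric]
    proof (intro sum.cong refl)
      fix i assume i: "i \<in> {..<r}"
      then have "\<not> i + (?N + 1 - r) < r" "?N + 1 - r \<le> i + (?N + 1 - r)" "?N - (i + (?N + 1 - r)) = r - Suc i"
        using r1 by auto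
      then show "f (i + (?N + 1 - r)) = (q - 1) * q ^ (r - Suc i)" unfolding f_def by simp
    qed
    also have "\<dots> = G" unfolding G_def by (rule sum.nat_diff_reindex)
    finally show ?thesis .
  qed
  finally have S: "(\<Sum>k<?N+1. f k) = q ^ r * G + G" by simp
  have qr: "q ^ r \<ge> 1" using q by simp
  have e1: "q ^ r * G + G = q ^ r * q ^ r - 1"
    unfolding G using qr by (simp add: algebra_simps diff_mult_distrib2)
  have e2: "q ^ r * q ^ r = q ^ (2 * r)" by (simp add: mult_2 power_add)
  have e3: "q ^ r * q ^ r \<ge> 1" using qr by (metis mult_le_mono nat_mult_1)
  have "1 + (q ^ r * G + G) = q ^ (2 * r)" unfolding e1 using e2 e3 by simp
  then show ?thesis using S unfolding f_def by simp
qed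



lemma q2: "2 \<le> card (UNIV :: 'a::{field,finite} set)"
proof -
  have "card {0 :: 'a, 1} = 2" by simp
  moreover have "card {0 :: 'a, 1} \<le> card (UNIV :: 'a set)" by (rule card_mono) auto
  ultimately show ?thesis by simp
qed

lemma HK_sub: "HK m n x \<subseteq> {P. \<forall>d. d \<notin> {..n} \<longrightarrow> fps_nth P d = 0}"
  unfolding HK_def by auto

lemma HK_fin: "finite (HK m n (x :: 'a::{field,finite} list))"
  by (rule finite_subset[OF HK_sub finite_fps_supp]) simp

lemma HK_zero: "card (HK m n (replicate L (0 :: 'a::{field,finite}))) = card (UNIV :: 'a set) ^ Suc n"
proof -
  have X: "Xs (replicate L (0::'a)) = 0" by (intro fps_ext) (simp add: Xs_nth)
  have "HK m n (replicate L (0 :: 'a)) = {P. \<forall>d. d \<notin> {..n} \<longrightarrow> fps_nth P d = 0}"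
    unfolding HK_def X by auto
  then show ?thesis using card_fps_supp[of "{..n}"] by simp
qed

context
  fixes a :: "'a::{field,finite}" and rest :: "'a list" and m n k :: nat
  assumes a: "a \<noteq> 0" and len: "length rest = m + n - k" and kN: "k \<le> m + n"
begin

lemma T0: "fps_nth (Xs (a # rest)) 0 \<noteq> 0" using a by (simp add: Xs_nth)

lemma lenk: "k + length rest = m + n" using len kN by simp

lemma block_A:
  assumes km: "k \<le> m" and kn: "k \<le> n"
  shows "card (HK m n (replicate k 0 @ a # rest)) =
    card {G. (\<forall>d. n - k \<le> d \<longrightarrow> fps_nth G d = 0) \<and> (\<forall>j. n < j \<and> j \<le> m + n - k \<longrightarrow> fps_nth (inverse (Xs (a # rest)) * G) j = 0)}"
proof -
  have "bij_betw (\<lambda>G. fps_cutoff (Suc n) (inverse (Xs (a # rest)) * G))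
     {G. (\<forall>d. n - k \<le> d \<longrightarrow> fps_nth G d = 0) \<and> (\<forall>j. n < j \<and> j \<le> m + n - k \<longrightarrow> fps_nth (inverse (Xs (a # rest)) * G) j = 0)}
     (HK m n (replicate k 0 @ a # rest))"
    unfolding HK_T[OF lenk] by (rule Euclid[OF T0 kn]) (use km in simp)
  then show ?thesis by (simp add: bij_betw_same_card)
qed

lemma block_A1:
  assumes km: "k < m" and kn: "k < n"
  shows "card (HK m n (replicate k 0 @ a # rest)) =
    card (HK (m - k - 1) (n - k - 1) (drop (k + 1) (ul (a # rest) (m + n - k))))"
proof -
  have "{G. (\<forall>d. n - k \<le> d \<longrightarrow> fps_nth G d = 0) \<and> (\<forall>j. n < j \<and> j \<le> m + n - k \<longrightarrow> fps_nth (inverse (Xs (a # rest)) * G) j = 0)}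
     = HK (m - k - 1) (n - k - 1) (drop (k + 1) (ul (a # rest) (m + n - k)))"
  proof (rule A2_eq[OF km kn])
    show "length (drop (k + 1) (ul (a # rest) (m + n - k))) = m + n - 2 * k - 1" by (simp add: ul_def)
    fix i assume "i < length (drop (k + 1) (ul (a # rest) (m + n - k)))"
    then have "k + 1 + i < m + n - k" by (simp add: ul_def)
    then show "drop (k + 1) (ul (a # rest) (m + n - k)) ! i = fps_nth (inverse (Xs (a # rest))) (k + 2 + i)"
      by (simp add: ul_def)
  qed
  then show ?thesis using block_A km kn by simp
qed

lemma block_A2:
  assumes km: "k \<le> m" and kn: "k \<le> n"
  shows "card (HK m n (replicate k 0 @ a # rest)) \<le> card (UNIV :: 'a set) ^ (n - k)"
proof -
  have "card {G. (\<forall>d. n - k \<le> d \<longrightarrow> fps_nth G d = 0) \<and> (\<forall>j. n < j \<and> j \<le> m + n - k \<longrightarrow> fps_nth (inverse (Xs (a # rest)) * G) j = 0)}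
     \<le> card {G :: 'a fps. \<forall>d. d \<notin> {..<n - k} \<longrightarrow> fps_nth G d = 0}"
    by (rule card_mono[OF finite_fps_supp]) auto
  also have "\<dots> = card (UNIV :: 'a set) ^ (n - k)" using card_fps_supp[of "{..<n - k}", where 'a = 'a] by simp
  finally show ?thesis using block_A[OF km kn] by simp
qed

lemma block_B:
  assumes km: "m < k"
  shows "card (HK m n (replicate k 0 @ a # rest)) = card (UNIV :: 'a set) ^ (n + 1 - (m + n - k + 1 - (n - k)))"
proof -
  have "card (HK m n (replicate k 0 @ a # rest)) = card (UNIV :: 'a set) ^ card ({..n} - {n - k..m + n - k})"
    unfolding HK_T[OF lenk] by (rule G1[OF T0]) (use km in simp)
  also have "card ({..n} - {n - k..m + n - k}) = n + 1 - (m + n - k + 1 - (n - k))"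
  proof -
    have "{n - k..m + n - k} \<subseteq> {..n}" using km by auto
    then have "card ({..n} - {n - k..m + n - k}) = card {..n} - card {n - k..m + n - k}"
      by (rule card_Diff_subset[OF finite_atLeastAtMost])
    then show ?thesis by simp
  qed
  finally show ?thesis .
qed

lemma block_C:
  assumes nk: "n < k" and km: "k \<le> m"
  shows "card (HK m n (replicate k 0 @ a # rest)) \<le> 1"
proof -
  have "HK m n (replicate k 0 @ a # rest) \<subseteq>
     {P. (\<forall>d. n < d \<longrightarrow> fps_nth P d = 0) \<and> (\<forall>j. 0 \<le> j \<and> j \<le> n \<longrightarrow> fps_nth (Xs (a # rest) * P) j = 0)}"
    unfolding HK_T[OF lenk] using nk km by auto
  then have "card (HK m n (replicate k 0 @ a # rest)) \<le>
     card {P. (\<forall>d. n < d \<longrightarrow> fps_nth P d = 0) \<and> (\<forall>j. 0 \<le> j \<and> j \<le> n \<longrightarrow> fps_nth (Xs (a # rest) * P) j = 0)}"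
    by (rule card_mono[rotated]) (rule finite_subset[OF _ finite_fps_supp[of "{..n}"]], auto)
  also have "\<dots> = card (UNIV :: 'a set) ^ card ({..n} - {0..n})" by (rule G1[OF T0]) simp
  also have "{..n} - {0..n} = {}" by auto
  finally show ?thesis by simp
qed

end


lemma arithB:
  fixes m n k r :: nat
  assumes "r \<le> m" "r \<le> n" "m < k" "k \<le> m + n"
  shows "(n + 1 - r \<le> n + 1 - (m + n - k + 1 - (n - k))) \<longleftrightarrow> (m + n + 1 - r \<le> k)"
  using assms by (cases "k \<le> n") auto

theorem main_count:
  "\<forall>m n. r \<le> m \<longrightarrow> r \<le> n \<longrightarrow>
    card {x :: 'a::{field,finite} list. length x = m + n + 1 \<and> card (UNIV :: 'a set) ^ (n + 1 - r) \<le> card (HK m n x)}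
    = card (UNIV :: 'a set) ^ (2 * r)"
proof (induction r rule: less_induct)
  case (less r)
  show ?case
  proof (intro allI impI)
    fix m n assume rm: "r \<le> m" and rn: "r \<le> n"
    define q where "q = card (UNIV :: 'a set)"
    have q2: "2 \<le> q" unfolding q_def by (rule q2)
    define P where "P x = (q ^ (n + 1 - r) \<le> card (HK m n (x :: 'a list)))" for x
    define f where "f k = (if k < r then q ^ (k + 1) * q ^ (2 * (r - k - 1))
              else if m + n + 1 - r \<le> k then q ^ (m + n - k) else 0)" for k
    have P0: "P (replicate (m + n + 1) 0)"
      unfolding P_def HK_zero q_def[symmetric] using q2 by (intro power_increasing) auto
    have block: "card {rest. length rest = m + n - k \<and> P (replicate k 0 @ a # rest)} = f k"
      if a: "a \<noteq> 0" and k: "k < m + n + 1" for a k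
    proof -
      have kN: "k \<le> m + n" using k by simp
      consider (A1) "k < r" | (A2) "r \<le> k" "k \<le> m" "k \<le> n" | (B) "m < k" | (C) "n < k" "k \<le> m"
        by linarith
      then show ?thesis
      proof cases
        case A1
        then have km: "k < m" and kn: "k < n" using rm rn by auto
        let ?m' = "m - k - 1" and ?n' = "n - k - 1" and ?r' = "r - k - 1"
        let ?Q = "\<lambda>u :: 'a list. q ^ (n + 1 - r) \<le> card (HK ?m' ?n' (drop (k + 1) u))"
        have eqset: "{rest. length rest = m + n - k \<and> P (replicate k 0 @ a # rest)}
            = {rest. length rest = m + n - k \<and> ?Q (ul (a # rest) (m + n - k))}"
          unfolding P_def using block_A1[OF a _ kN km kn] by auto
        have "card {rest. length rest = m + n - k \<and> ?Q (ul (a # rest) (m + n - k))} = card {u. length u = m + n - k \<and> ?Q u}"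
          by (rule ul_count[OF a, where Q = ?Q and L = "m + n - k"])
        then have c1: "card {rest. length rest = m + n - k \<and> P (replicate k 0 @ a # rest)}
            = card {u. length u = m + n - k \<and> ?Q u}" unfolding eqset .
        have len_eq: "m + n - k = (k + 1) + (?m' + ?n' + 1)" using km kn by simp
        have c2: "card {u. length u = m + n - k \<and> ?Q u}
            = q ^ (k + 1) * card {\<rho> :: 'a list. length \<rho> = ?m' + ?n' + 1 \<and> q ^ (n + 1 - r) \<le> card (HK ?m' ?n' \<rho>)}"
          unfolding len_eq q_def by (rule split_drop)
        have c3: "n + 1 - r = ?n' + 1 - ?r'" using A1 rn by simp
        have c4: "card {\<rho> :: 'a list. length \<rho> = ?m' + ?n' + 1 \<and> q ^ (n + 1 - r) \<le> card (HK ?m' ?n' \<rho>)} = q ^ (2 * ?r')"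
        proof -
          have lt: "?r' < r" using A1 by simp
          have r1: "?r' \<le> ?m'" "?r' \<le> ?n'" using rm rn A1 by auto
          have "card {x :: 'a list. length x = ?m' + ?n' + 1 \<and> card (UNIV :: 'a set) ^ (?n' + 1 - ?r') \<le> card (HK ?m' ?n' x)}
              = card (UNIV :: 'a set) ^ (2 * ?r')"
            using less.IH[OF lt] r1 by blast
          then show ?thesis unfolding q_def c3 .
        qed
        have "card {rest. length rest = m + n - k \<and> P (replicate k 0 @ a # rest)} = q ^ (k + 1) * q ^ (2 * ?r')"
          by (simp only: c1 c2 c4)
        then show ?thesis unfolding f_def using A1 by simp
      next
        case A2
        have E: "{rest. length rest = m + n - k \<and> P (replicate k 0 @ a # rest)} = {}"
        proof (intro Set.set_eqI iffI)
          fix rest assume "rest \<in> {rest. length rest = m + n - k \<and> P (replicate k 0 @ a # rest)}"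
          then have l: "length rest = m + n - k" and p: "P (replicate k 0 @ a # rest)" by auto
          have "card (HK m n (replicate k 0 @ a # rest)) \<le> q ^ (n - k)"
            using block_A2[OF a l kN A2(2,3)] unfolding q_def .
          also have "\<dots> < q ^ (n + 1 - r)" using q2 A2 rn by (intro power_strict_increasing) auto
          finally show "rest \<in> {}" using p unfolding P_def by simp
        qed auto
        moreover have "\<not> k < r" "\<not> m + n + 1 - r \<le> k" using A2 rn by auto
        ultimately show ?thesis unfolding f_def E by simp
      next
        case B
        have E: "{rest. length rest = m + n - k \<and> P (replicate k 0 @ a # rest)}
            = {rest. length rest = m + n - k \<and> m + n + 1 - r \<le> k}"
        proof -
          have "P (replicate k 0 @ a # rest) \<longleftrightarrow> m + n + 1 - r \<le> k" if l: "length rest = m + n - k" for rest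
          proof -
            have "P (replicate k 0 @ a # rest) \<longleftrightarrow> q ^ (n + 1 - r) \<le> q ^ (n + 1 - (m + n - k + 1 - (n - k)))"
              unfolding P_def using block_B[OF a l kN B] unfolding q_def by simp
            also have "\<dots> \<longleftrightarrow> n + 1 - r \<le> n + 1 - (m + n - k + 1 - (n - k))"
              using q2 by (intro power_increasing_iff) simp
            also have "\<dots> \<longleftrightarrow> m + n + 1 - r \<le> k" by (rule arithB[OF rm rn B kN])
            finally show ?thesis .
          qed
          then show ?thesis by auto
        qed
        moreover have "\<not> k < r" using B rm by simp
        ultimately show ?thesis unfolding f_def E using card_len[of "m + n - k", where 'a = 'a] unfolding q_def
          by (cases "m + n + 1 - r \<le> k") auto
      next
        case C
        have E: "{rest. length rest = m + n - k \<and> P (replicate k 0 @ a # rest)} = {}"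
        proof (intro Set.set_eqI iffI)
          fix rest assume "rest \<in> {rest. length rest = m + n - k \<and> P (replicate k 0 @ a # rest)}"
          then have l: "length rest = m + n - k" and p: "P (replicate k 0 @ a # rest)" by auto
          have "card (HK m n (replicate k 0 @ a # rest)) \<le> 1" using block_C[OF a l kN C] .
          also have "1 < q ^ (n + 1 - r)" using q2 rn by (intro one_less_power) auto
          finally show "rest \<in> {}" using p unfolding P_def by simp
        qed auto
        moreover have "\<not> k < r" "\<not> m + n + 1 - r \<le> k" using C rn by auto
        ultimately show ?thesis unfolding f_def E by simp
      qed
    qed
    have "card {x. length x = m + n + 1 \<and> P x} = 1 +
      (\<Sum>k<m + n + 1. card {(a, rest). a \<noteq> 0 \<and> length rest = m + n + 1 - 1 - k \<and> P (replicate k 0 @ a # rest)})"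
      using decomp[of "m + n + 1" P] P0 by simp
    also have "\<dots> = 1 + (\<Sum>k<m + n + 1. (q - 1) * f k)"
    proof -
      have "card {(a, rest). a \<noteq> 0 \<and> length rest = m + n + 1 - 1 - k \<and> P (replicate k 0 @ a # rest)} = (q - 1) * f k"
        if k: "k \<in> {..<m + n + 1}" for k
        unfolding q_def by (rule pair_count) (use block k in auto)
      then show ?thesis by simp
    qed
    also have "\<dots> = q ^ (2 * r)" unfolding f_def using final_sum[of q r m n] q2 rm rn by simp
    finally show "card {x :: 'a list. length x = m + n + 1 \<and> card (UNIV :: 'a set) ^ (n + 1 - r) \<le> card (HK m n x)}
      = card (UNIV :: 'a set) ^ (2 * r)" unfolding P_def q_def .
  qed
qed


lemma hankel_conv:
  fixes x :: "'a::comm_ring_1 list"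
  assumes sP: "\<forall>d. n < d \<longrightarrow> fps_nth P d = 0"
  shows "fps_nth (Xs x * P) (n + i) = (\<Sum>l=0..n. fps_nth (Xs x) (l + i) * fps_nth P (n - l))"
proof -
  let ?g = "\<lambda>d. fps_nth (Xs x) d * fps_nth P (n + i - d)"
  have "fps_nth (Xs x * P) (n + i) = (\<Sum>d=0..n+i. ?g d)" by (rule fps_mult_nth)
  also have "\<dots> = (\<Sum>d=i..n+i. ?g d)"
    by (rule sum.mono_neutral_right) (use sP in auto)
  also have "\<dots> = (\<Sum>d=0+i..n+i. ?g d)" by simp
  also have "\<dots> = (\<Sum>l=0..n. ?g (l + i))" by (rule sum.shift_bounds_cl_nat_ivl)
  also have "\<dots> = (\<Sum>l=0..n. fps_nth (Xs x) (l + i) * fps_nth P (n - l))"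
    by (intro sum.cong refl) simp
  finally show ?thesis .
qed

lemma hankel_row:
  fixes x :: "'a::comm_ring_1 list"
  assumes i: "i \<le> m" and v: "v \<in> carrier_vec (n + 1)"
  shows "(hankel m n x *\<^sub>v v) $ i = (\<Sum>l=0..n. x ! (i + l) * v $ l)"
proof -
  have "(hankel m n x *\<^sub>v v) $ i = row (hankel m n x) i \<bullet> v"
    using i by (simp add: hankel_def)
  also have "\<dots> = (\<Sum>l\<in>{0..<n+1}. row (hankel m n x) i $ l * v $ l)"
    using v by (simp add: scalar_prod_def)
  also have "\<dots> = (\<Sum>l=0..n. x ! (i + l) * v $ l)"
    using i by (intro sum.cong) (auto simp: hankel_def)
  finally show ?thesis .
qed

lemma card_kernel_HK:
  fixes x :: "'a::{field,finite} list"
  assumes len: "length x = m + n + 1"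
  shows "card (mat_kernel (hankel m n x)) = card (HK m n x)"
proof -
  let ?A = "hankel m n x"
  have A: "?A \<in> carrier_mat (m + 1) (n + 1)" by (simp add: hankel_def)
  let ?phi = "\<lambda>v :: 'a vec. Abs_fps (\<lambda>d. if d \<le> n then v $ (n - d) else 0)"
  let ?psi = "\<lambda>P. vec (n + 1) (\<lambda>l. fps_nth P (n - l))"
  have conv: "fps_nth (Xs x * P) (n + i) = (\<Sum>l=0..n. x ! (i + l) * fps_nth P (n - l))"
    if sP: "\<forall>d. n < d \<longrightarrow> fps_nth P d = 0" and i: "i \<le> m" for P i
  proof -
    have "fps_nth (Xs x * P) (n + i) = (\<Sum>l=0..n. fps_nth (Xs x) (l + i) * fps_nth P (n - l))"
      by (rule hankel_conv[OF sP])
    also have "\<dots> = (\<Sum>l=0..n. x ! (i + l) * fps_nth P (n - l))"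
      using i len by (intro sum.cong refl) (simp add: Xs_nth add.commute)
    finally show ?thesis .
  qed
  have ker: "v \<in> mat_kernel ?A \<longleftrightarrow> v \<in> carrier_vec (n + 1) \<and> (\<forall>i\<le>m. (\<Sum>l=0..n. x ! (i + l) * v $ l) = 0)" for v
  proof
    assume "v \<in> mat_kernel ?A"
    then have v: "v \<in> carrier_vec (n + 1)" and z: "?A *\<^sub>v v = 0\<^sub>v (m + 1)" using mat_kernelD[OF A] by auto
    have "(\<Sum>l=0..n. x ! (i + l) * v $ l) = 0" if i: "i \<le> m" for i
    proof -
      have "(?A *\<^sub>v v) $ i = 0" using z i by simp
      then show ?thesis using hankel_row[OF i v] by simp
    qed
    then show "v \<in> carrier_vec (n + 1) \<and> (\<forall>i\<le>m. (\<Sum>l=0..n. x ! (i + l) * v $ l) = 0)" using v by auto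
  next
    assume h: "v \<in> carrier_vec (n + 1) \<and> (\<forall>i\<le>m. (\<Sum>l=0..n. x ! (i + l) * v $ l) = 0)"
    then have v: "v \<in> carrier_vec (n + 1)" by simp
    have "?A *\<^sub>v v = 0\<^sub>v (m + 1)"
    proof (rule eq_vecI)
      show "dim_vec (?A *\<^sub>v v) = dim_vec (0\<^sub>v (m + 1) :: 'a vec)" by (simp add: hankel_def)
      fix i assume "i < dim_vec (0\<^sub>v (m + 1) :: 'a vec)"
      then have i: "i \<le> m" by simp
      show "(?A *\<^sub>v v) $ i = 0\<^sub>v (m + 1) $ i" using hankel_row[OF i v] h i by simp
    qed
    then show "v \<in> mat_kernel ?A" by (rule mat_kernelI[OF A v])
  qed
  have "bij_betw ?phi (mat_kernel ?A) (HK m n x)"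
  proof (rule bij_betwI[where g = ?psi])
    show "?phi \<in> mat_kernel ?A \<rightarrow> HK m n x"
    proof
      fix v assume "v \<in> mat_kernel ?A"
      then have v: "v \<in> carrier_vec (n + 1)" and z: "\<And>i. i \<le> m \<Longrightarrow> (\<Sum>l=0..n. x ! (i + l) * v $ l) = 0"
        using ker by auto
      have sP: "\<forall>d. n < d \<longrightarrow> fps_nth (?phi v) d = 0" by simp
      have "fps_nth (Xs x * ?phi v) (n + i) = 0" if i: "i \<le> m" for i
      proof -
        have "fps_nth (Xs x * ?phi v) (n + i) = (\<Sum>l=0..n. x ! (i + l) * fps_nth (?phi v) (n - l))"
          by (rule conv[OF sP i])
        also have "\<dots> = (\<Sum>l=0..n. x ! (i + l) * v $ l)" by (intro sum.cong refl) auto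
        also have "\<dots> = 0" by (rule z[OF i])
        finally show ?thesis .
      qed
      then show "?phi v \<in> HK m n x" unfolding HK_def using sP by auto
    qed
    show "?psi \<in> HK m n x \<rightarrow> mat_kernel ?A"
    proof
      fix P assume "P \<in> HK m n x"
      then have sP: "\<forall>d. n < d \<longrightarrow> fps_nth P d = 0" and z: "\<And>i. i \<le> m \<Longrightarrow> fps_nth (Xs x * P) (n + i) = 0"
        unfolding HK_def by auto
      have "(\<Sum>l=0..n. x ! (i + l) * ?psi P $ l) = 0" if i: "i \<le> m" for i
      proof -
        have "(\<Sum>l=0..n. x ! (i + l) * ?psi P $ l) = (\<Sum>l=0..n. x ! (i + l) * fps_nth P (n - l))"
          by (intro sum.cong refl) auto
        also have "\<dots> = fps_nth (Xs x * P) (n + i)" by (rule conv[OF sP i, symmetric])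
        also have "\<dots> = 0" by (rule z[OF i])
        finally show ?thesis .
      qed
      then show "?psi P \<in> mat_kernel ?A" unfolding ker by auto
    qed
  next
    fix v assume "v \<in> mat_kernel ?A"
    then have v: "v \<in> carrier_vec (n + 1)" using ker by auto
    show "?psi (?phi v) = v"
      by (rule eq_vecI) (use v in auto)
  next
    fix P assume "P \<in> HK m n x"
    then have sP: "\<forall>d. n < d \<longrightarrow> fps_nth P d = 0" unfolding HK_def by auto
    show "?phi (?psi P) = P"
    proof (rule fps_ext)
      fix d show "fps_nth (?phi (?psi P)) d = fps_nth P d" using sP by auto
    qed
  qed
  then show ?thesis by (rule bij_betw_same_card)
qed

lemma rank_iff:
  fixes x :: "'a::{field,finite} list"
  assumes len: "length x = m + n + 1" and rn: "r \<le> n"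
  shows "mat_rank (hankel m n x) \<le> r \<longleftrightarrow> card (UNIV :: 'a set) ^ (n + 1 - r) \<le> card (HK m n x)"
proof -
  let ?A = "hankel m n x" and ?q = "card (UNIV :: 'a set)"
  have A: "?A \<in> carrier_mat (m + 1) (n + 1)" by (simp add: hankel_def)
  have q: "2 \<le> ?q" by (rule q2)
  have rk: "mat_rank ?A \<le> n + 1"
    unfolding mat_rank_def using vec_space.rank_le_nc[OF A] A by simp
  have ck: "card (mat_kernel ?A) * ?q ^ mat_rank ?A = ?q ^ (n + 1)" by (rule card_kernel_rank[OF A])
  have "?q ^ (n + 1) = ?q ^ (n + 1 - mat_rank ?A) * ?q ^ mat_rank ?A"
    using rk by (simp add: power_add[symmetric])
  with ck have ck2: "card (mat_kernel ?A) = ?q ^ (n + 1 - mat_rank ?A)"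
    using q by simp
  have "mat_rank ?A \<le> r \<longleftrightarrow> n + 1 - r \<le> n + 1 - mat_rank ?A" using rk rn by auto
  also have "\<dots> \<longleftrightarrow> ?q ^ (n + 1 - r) \<le> ?q ^ (n + 1 - mat_rank ?A)"
    using q by (intro power_increasing_iff[symmetric]) simp
  also have "\<dots> \<longleftrightarrow> ?q ^ (n + 1 - r) \<le> card (HK m n x)"
    using ck2 card_kernel_HK[OF len] by simp
  finally show ?thesis .
qed

theorem theorem1:
  fixes r m n :: nat
  assumes "r \<le> m" and "r \<le> n"
  shows "card {x :: 'a::{field,finite} list. length x = m + n + 1 \<and> mat_rank (hankel m n x) \<le> r}
           = card (UNIV :: 'a set) ^ (2 * r)"
proof -
  have "{x :: 'a list. length x = m + n + 1 \<and> mat_rank (hankel m n x) \<le> r}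
      = {x :: 'a list. length x = m + n + 1 \<and> card (UNIV :: 'a set) ^ (n + 1 - r) \<le> card (HK m n x)}"
    using rank_iff[OF _ assms(2)] by auto
  then show ?thesis using main_count[of r, where 'a = 'a] assms by simp
qed

end
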